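(* Let $m\ge1$, let $\vartheta=\vartheta_m$ be the degree-$m$ random metallic mean substitution, $\mathcal{S}_m=\{a^iba^{m-i}\mid0\le i\le m\}$, $p\ge0$, and $u$ a finite word over $\{a,b\}$. If the set $\vartheta^p(a)\,u\,\mathcal{S}_m$ contains a $\vartheta$-legal word, then for every $0\le j\le m$ the set $\vartheta^p(a)\,\vartheta(u)\,(\vartheta(b))^j\,\mathcal{S}_m$ contains a $\vartheta$-legal word.
   Context: The degree-$m$ random metallic mean substitution is $\vartheta_m\colon a\mapsto\{a^iba^{m-i}\mid0\le i\le m\},\ b\mapsto\{a\}$ (for $m=1$ this is the random Fibonacci substitution $a\mapsto\{ab,ba\}, b\mapsto\{a\}$). It is extended to words by set concatenation $\vartheta(w_1\cdots w_k)=\vartheta(w_1)\cdots\vartheta(w_k)$ with $AB=\{xy\mid x\in A,y\in B\}$ (single words identified with singletons), and to sets by unions; $\vartheta^p$ is the $p$-fold iterate, $\vartheta^0(a)=\{a\}$; for a set $A$, $A^0=\{\text{empty word}\}$ and $A^j$ is the $j$-fold set concatenation. A word is $\vartheta$-legal if it is a subword of some word in $\vartheta^k(x)$ for some $k\ge0$ and letter $x$. *)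

theory Defs
  imports Main "HOL-Library.Sublist"
begin

datatype letter = a | b

type_synonym word = "letter list"

definition setcat :: "word set \<Rightarrow> word set \<Rightarrow> word set" where
  "setcat X Y = {x @ y | x y. x \<in> X \<and> y \<in> Y}"

fun setpow :: "word set \<Rightarrow> nat \<Rightarrow> word set" where
  "setpow X 0 = {[]}"
| "setpow X (Suc j) = setcat X (setpow X j)"

definition metallicS :: "nat \<Rightarrow> word set" where
  "metallicS m = {replicate i a @ [b] @ replicate (m - i) a | i. i \<le> m}"

fun theta :: "nat \<Rightarrow> letter \<Rightarrow> word set" where
  "theta m a = metallicS m"
| "theta m b = {[a]}"

fun subst_word :: "(letter \<Rightarrow> word set) \<Rightarrow> word \<Rightarrow> word set" where
  "subst_word \<sigma> [] = {[]}"
| "subst_word \<sigma> (x # w) = setcat (\<sigma> x) (subst_word \<sigma> w)"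

definition subst_set :: "(letter \<Rightarrow> word set) \<Rightarrow> word set \<Rightarrow> word set" where
  "subst_set \<sigma> W = (\<Union>w\<in>W. subst_word \<sigma> w)"

definition subst_iter :: "(letter \<Rightarrow> word set) \<Rightarrow> nat \<Rightarrow> word set \<Rightarrow> word set" where
  "subst_iter \<sigma> p W = (subst_set \<sigma> ^^ p) W"

definition legal :: "(letter \<Rightarrow> word set) \<Rightarrow> word \<Rightarrow> bool" where
  "legal \<sigma> v \<longleftrightarrow> (\<exists>k x w. w \<in> subst_iter \<sigma> k {[x]} \<and> sublist v w)"

end

theory Submission
  imports Defs
begin

lemma setcatI: "x \<in> X \<Longrightarrow> y \<in> Y \<Longrightarrow> x @ y \<in> setcat X Y"
  unfolding setcat_def by blast

lemma setcatE: "z \<in> setcat X Y \<Longrightarrow> (\<And>x y. z = x @ y \<Longrightarrow> x \<in> X \<Longrightarrow> y \<in> Y \<Longrightarrow> P) \<Longrightarrow> P"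
  unfolding setcat_def by blast

lemma setcat_assoc: "setcat (setcat X Y) Z = setcat X (setcat Y Z)"
  unfolding setcat_def by (auto, metis append.assoc, metis append.assoc)

lemma setcat_nil: "setcat {[]} X = X"
  unfolding setcat_def by auto

lemma sw_append: "subst_word s (u @ v) = setcat (subst_word s u) (subst_word s v)"
  by (induction u) (simp_all add: setcat_nil setcat_assoc)

lemma subst_set_setcat:
  "subst_set s (setcat A B) = setcat (subst_set s A) (subst_set s B)"
proof
  show "subst_set s (setcat A B) \<subseteq> setcat (subst_set s A) (subst_set s B)"
    unfolding subst_set_def by (auto simp: sw_append elim!: setcatE intro!: setcatI)
  show "setcat (subst_set s A) (subst_set s B) \<subseteq> subst_set s (setcat A B)"
  proof
    fix z assume "z \<in> setcat (subst_set s A) (subst_set s B)"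
    then obtain x y u v where "z = x @ y" "u \<in> A" "x \<in> subst_word s u" "v \<in> B" "y \<in> subst_word s v"
      unfolding subst_set_def by (auto elim!: setcatE)
    then show "z \<in> subst_set s (setcat A B)"
      unfolding subst_set_def by (auto simp: sw_append intro!: setcatI bexI[of _ "u @ v"])
  qed
qed

lemma iter_Suc: "subst_iter s (Suc k) W = subst_set s (subst_iter s k W)"
  unfolding subst_iter_def by simp

lemma iter_0: "subst_iter s 0 W = W"
  unfolding subst_iter_def by simp

lemma iter_append:
  "subst_iter s k {u @ v} = setcat (subst_iter s k {u}) (subst_iter s k {v})"
proof (induction k)
  case 0 then show ?case by (simp add: iter_0 setcat_def)
next
  case (Suc k) then show ?case by (simp add: iter_Suc subst_set_setcat)
qed

lemma S_ne: "[b] @ replicate m a \<in> metallicS m"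
  unfolding metallicS_def by force

lemma sw_ne: "\<exists>z. z \<in> subst_word (theta m) w"
proof (induction w)
  case Nil then show ?case by simp
next
  case (Cons c w)
  then obtain z where z: "z \<in> subst_word (theta m) w" by blast
  obtain y where "y \<in> theta m c" using S_ne by (cases c) auto
  then show ?case using z by (auto intro: setcatI)
qed

lemma legal_subst:
  assumes "legal (theta m) v" "z \<in> subst_word (theta m) v"
  shows "legal (theta m) z"
proof -
  obtain k c W where W: "W \<in> subst_iter (theta m) k {[c]}" "sublist v W"
    using assms(1) unfolding legal_def by blast
  then obtain P Q where PQ: "W = P @ v @ Q" unfolding sublist_def by blast
  obtain p where p: "p \<in> subst_word (theta m) P" using sw_ne by blast
  obtain q where q: "q \<in> subst_word (theta m) Q" using sw_ne by blast
  have "p @ z @ q \<in> subst_word (theta m) W"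
    using PQ p q assms(2) by (simp add: sw_append setcatI)
  then have "p @ z @ q \<in> subst_iter (theta m) (Suc k) {[c]}"
    using W(1) by (auto simp: iter_Suc subst_set_def)
  then show ?thesis unfolding legal_def
    by (metis sublist_appendI)
qed

lemma sw_rep_a: "subst_word (theta m) (replicate n a) = setpow (metallicS m) n"
  by (induction n) auto

lemma sw_b: "subst_word (theta m) [b] = {[a]}"
  by (simp add: setcat_def)

lemma concat_setpow:
  "(\<forall>w\<in>set ws. w \<in> X) \<Longrightarrow> concat ws \<in> setpow X (length ws)"
  by (induction ws) (auto intro: setcatI)

lemma setpow_b: "setpow (theta m b) j = {replicate j a}"
  by (induction j) (auto simp: setcat_def)

lemma ID:
  "[a] @ concat (replicate n (C @ [a])) = concat (replicate n (a # C)) @ [a]"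
  by (induction n) auto

definition sig :: "nat \<Rightarrow> nat \<Rightarrow> word" where
  "sig m j = replicate j a @ [b] @ replicate (m - j) a
     @ concat (replicate (m - 1) (replicate m a @ [b])) @ [a]"

lemma S_mem: "i \<le> m \<Longrightarrow> replicate i a @ [b] @ replicate (m - i) a \<in> metallicS m"
  unfolding metallicS_def by blast

lemma sig_mem:
  assumes "1 \<le> j" "j \<le> m" "i \<le> m"
  shows "sig m j \<in> subst_word (theta m) (replicate i a @ [b] @ replicate (m - i) a)"
proof -
  obtain m' where m': "m = Suc m'" using assms by (cases m) auto
  define C where "C = replicate m' a @ [b]"
  define A where "A = a # C"
  define B where "B = C @ [a]"
  have A: "replicate m a @ [b] = A" by (simp add: A_def C_def m')
  have AS: "A \<in> metallicS m" using S_mem[of m m] by (simp add: A_def C_def m')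
  have BS: "B \<in> metallicS m" using S_mem[of m' m] by (simp add: B_def C_def m')
  have sw: "subst_word (theta m) (replicate i a @ [b] @ replicate (m - i) a)
      = setcat (setpow (metallicS m) i) (setcat {[a]} (setpow (metallicS m) (m - i)))"
    by (simp add: sw_append sw_rep_a sw_b)
  show ?thesis
  proof (cases i)
    case 0
    define B' where "B' = replicate (j - 1) a @ [b] @ replicate (m - (j - 1)) a"
    have B'S: "B' \<in> metallicS m" unfolding B'_def using assms by (intro S_mem) auto
    have c: "concat (B' # replicate (m - 1) B) \<in> setpow (metallicS m) m"
      using concat_setpow[of "B' # replicate (m - 1) B" "metallicS m"] B'S BS assms
      by auto
    have eq: "sig m j = [] @ [a] @ concat (B' # replicate (m - 1) B)"
    proof -
      have r: "replicate (m - (j - 1)) a = replicate (m - j) a @ [a]"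
      proof -
        have "m - (j - 1) = Suc (m - j)" using assms by auto
        then show ?thesis by (simp add: replicate_append_same)
      qed
      have rj: "replicate j a = a # replicate (j - 1) a"
      proof -
        have "j = Suc (j - 1)" using assms by auto
        then show ?thesis by (metis replicate_Suc)
      qed
      show ?thesis unfolding sig_def B'_def B_def
        using ID[of "m - 1" C] A[symmetric] r rj by (simp add: A_def)
    qed
    have "[] @ [a] @ concat (B' # replicate (m - 1) B)
      \<in> setcat (setpow (metallicS m) 0) (setcat {[a]} (setpow (metallicS m) (m - 0)))"
      using c by (intro setcatI) auto
    then show ?thesis unfolding eq sw by (simp only: 0)
  next
    case (Suc i')
    define F where "F = replicate j a @ [b] @ replicate (m - j) a"
    have FS: "F \<in> metallicS m" unfolding F_def using assms by (intro S_mem) auto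
    have c1: "concat (F # replicate i' A) \<in> setpow (metallicS m) i"
      using concat_setpow[of "F # replicate i' A" "metallicS m"] FS AS Suc by auto
    have c2: "concat (replicate (m - i) B) \<in> setpow (metallicS m) (m - i)"
      using concat_setpow[of "replicate (m - i) B" "metallicS m"] BS by auto
    have eq: "sig m j = concat (F # replicate i' A) @ [a] @ concat (replicate (m - i) B)"
    proof -
      have "m - 1 = i' + (m - i)" using Suc assms by auto
      then have "concat (replicate (m - 1) A) = concat (replicate i' A) @ concat (replicate (m - i) A)"
        by (simp add: replicate_add)
      then show ?thesis unfolding sig_def F_def B_def
        using ID[of "m - i" C] A by (simp add: A_def)
    qed
    show ?thesis unfolding sw eq
      by (intro setcatI c1 c2) auto
  qed
qed

lemma sig_prefix:
  assumes "j \<le> m" "1 \<le> m"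
  shows "\<exists>s' r. s' \<in> metallicS m \<and> sig m (max j 1) = replicate j a @ s' @ r"
proof (cases j)
  case 0
  then show ?thesis
    using S_mem[of 1 m] assms by (auto simp: sig_def)
next
  case (Suc j')
  have mx: "max j 1 = j" using Suc by auto
  show ?thesis
  proof (cases "m = 1")
    case True
    then have "j = 1" using assms Suc by auto
    then show ?thesis using True S_ne[of 1] by (auto simp: sig_def)
  next
    case False
    then obtain m2 where m2: "m - 1 = Suc m2" using assms by (cases "m - 1") auto
    have rm: "replicate m a = replicate j a @ replicate (m - j) a"
      using assms replicate_add[of j "m - j" a] by simp
    have "sig m j = replicate j a @ ([b] @ replicate (m - j) a @ replicate j a)
       @ (replicate (m - j) a @ [b] @ concat (replicate m2 (replicate m a @ [b])) @ [a])"
      unfolding sig_def m2 by (simp add: rm)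
    moreover have "[b] @ replicate (m - j) a @ replicate j a = [b] @ replicate m a"
      using assms replicate_add[of "m - j" j a] by simp
    ultimately have "[b] @ replicate (m - j) a @ replicate j a \<in> metallicS m"
      using S_ne[of m] by simp
    then show ?thesis using mx \<open>sig m j = _\<close>
      by (intro exI[of _ "[b] @ replicate (m - j) a @ replicate j a"] exI conjI) auto
  qed
qed

lemma sw_common:
  assumes "x \<in> subst_word (theta m) x0" "y \<in> subst_word (theta m) x0" "1 \<le> m"
  shows "\<exists>z. z \<in> subst_word (theta m) x \<and> z \<in> subst_word (theta m) y"
  using assms(1,2)
proof (induction x0 arbitrary: x y)
  case Nil then show ?case by auto
next
  case (Cons c r)
  from Cons.prems(1) obtain x1 x2 where x: "x = x1 @ x2" "x1 \<in> theta m c" "x2 \<in> subst_word (theta m) r"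
    by (auto elim: setcatE)
  from Cons.prems(2) obtain y1 y2 where y: "y = y1 @ y2" "y1 \<in> theta m c" "y2 \<in> subst_word (theta m) r"
    by (auto elim: setcatE)
  obtain z2 where z2: "z2 \<in> subst_word (theta m) x2" "z2 \<in> subst_word (theta m) y2"
    using Cons.IH x(3) y(3) by blast
  have "\<exists>z1. z1 \<in> subst_word (theta m) x1 \<and> z1 \<in> subst_word (theta m) y1"
  proof (cases c)
    case a
    then obtain i i' where "i \<le> m" "x1 = replicate i a @ [b] @ replicate (m - i) a"
       "i' \<le> m" "y1 = replicate i' a @ [b] @ replicate (m - i') a"
      using x(2) y(2) by (auto simp: metallicS_def)
    then show ?thesis using sig_mem[of 1 m] assms(3) by blast
  next
    case b
    then have "x1 = [a]" "y1 = [a]" using x(2) y(2) by auto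
    then show ?thesis using sw_ne[of m "[a]"] by auto
  qed
  then obtain z1 where "z1 \<in> subst_word (theta m) x1" "z1 \<in> subst_word (theta m) y1" by blast
  then show ?case using z2 x(1) y(1) by (auto simp: sw_append intro: setcatI)
qed

lemma H:
  assumes "x \<in> subst_iter (theta m) p {[a]}" "w \<in> metallicS m" "1 \<le> m"
  shows "\<exists>z \<in> subst_word (theta m) x. z \<in> subst_iter (theta m) p {w}"
  using assms(1)
proof (induction p arbitrary: x)
  case 0
  then show ?case using assms(2) by (auto simp: iter_0 setcat_def)
next
  case (Suc p)
  then obtain x0 where x0: "x0 \<in> subst_iter (theta m) p {[a]}" "x \<in> subst_word (theta m) x0"
    by (auto simp: iter_Suc subst_set_def)
  obtain y where y: "y \<in> subst_word (theta m) x0" "y \<in> subst_iter (theta m) p {w}"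
    using Suc.IH x0(1) by blast
  obtain z where "z \<in> subst_word (theta m) x" "z \<in> subst_word (theta m) y"
    using sw_common x0(2) y(1) assms(3) by blast
  then show ?case using y(2) by (auto simp: iter_Suc subst_set_def)
qed

lemma D:
  assumes "x \<in> subst_iter (theta m) p {[a]}" "1 \<le> m"
  shows "\<exists>t x'. t @ x' \<in> subst_word (theta m) x \<and> x' \<in> subst_iter (theta m) p {[a]}"
proof -
  obtain m' where m': "m = Suc m'" using assms by (cases m) auto
  have w: "[b] @ replicate m a = ([b] @ replicate m' a) @ [a]"
    by (simp add: m' replicate_append_same)
  obtain z where "z \<in> subst_word (theta m) x" "z \<in> subst_iter (theta m) p {[b] @ replicate m a}"
    using H[OF assms(1) S_ne assms(2)] by blast
  then obtain z1 x' where "z = z1 @ x'" "x' \<in> subst_iter (theta m) p {[a]}"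
    unfolding w iter_append by (auto elim!: setcatE)
  then show ?thesis using \<open>z \<in> subst_word (theta m) x\<close> by blast
qed

theorem mainTheorem9:
  fixes m p :: nat and u :: word
  assumes "m \<ge> 1"
    and "\<exists>v \<in> setcat (setcat (subst_iter (theta m) p {[a]}) {u}) (metallicS m).
           legal (theta m) v"
  shows "\<forall>j \<le> m. \<exists>v \<in> setcat (setcat (setcat (subst_iter (theta m) p {[a]})
                (subst_word (theta m) u)) (setpow (theta m b) j)) (metallicS m).
           legal (theta m) v"
proof (intro allI impI)
  fix j assume j: "j \<le> m"
  obtain x s where xs: "x \<in> subst_iter (theta m) p {[a]}" "s \<in> metallicS m"
     "legal (theta m) ((x @ u) @ s)"
    using assms(2) by (auto elim!: setcatE)
  obtain i where i: "i \<le> m" "s = replicate i a @ [b] @ replicate (m - i) a"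
    using xs(2) unfolding metallicS_def by auto
  obtain t x' where tx: "t @ x' \<in> subst_word (theta m) x" "x' \<in> subst_iter (theta m) p {[a]}"
    using D xs(1) assms(1) by blast
  obtain y where y: "y \<in> subst_word (theta m) u" using sw_ne by blast
  have sg: "sig m (max j 1) \<in> subst_word (theta m) s"
    using sig_mem[of "max j 1" m i] i j assms(1) by auto
  obtain s' r where sr: "s' \<in> metallicS m" "sig m (max j 1) = replicate j a @ s' @ r"
    using sig_prefix j assms(1) by blast
  have "((t @ x') @ y) @ sig m (max j 1) \<in> subst_word (theta m) ((x @ u) @ s)"
    unfolding sw_append using tx(1) y sg by (intro setcatI)
  then have L: "legal (theta m) (((t @ x') @ y) @ sig m (max j 1))"
    by (rule legal_subst[OF xs(3)])
  have sub: "sublist (((x' @ y) @ replicate j a) @ s') (((t @ x') @ y) @ sig m (max j 1))"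
    unfolding sr(2) sublist_def by (intro exI[of _ t] exI[of _ r]) simp
  have "legal (theta m) (((x' @ y) @ replicate j a) @ s')"
    using L sub unfolding legal_def by (meson sublist_order.dual_order.trans)
  moreover have "((x' @ y) @ replicate j a) @ s' \<in> setcat (setcat (setcat (subst_iter (theta m) p {[a]})
                (subst_word (theta m) u)) (setpow (theta m b) j)) (metallicS m)"
    using tx(2) y sr(1) setpow_b[of m j] by (intro setcatI) auto
  ultimately show "\<exists>v \<in> setcat (setcat (setcat (subst_iter (theta m) p {[a]})
                (subst_word (theta m) u)) (setpow (theta m b) j)) (metallicS m).
           legal (theta m) v" by blast
qed

end
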